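(* Let $A\in\mathbb{C}^{n\times m}$, $\alpha_1\ge1/\sqrt{n}$, $\alpha_2\ge1/\sqrt{m}$, $B\in\mathbb{C}^{l\times n}$, $b\in\mathbb{R}^l$, $D\in\mathbb{C}^{q\times m}$, $d\in\mathbb{R}^q$, and define $$S_1=\Big\{u\in\mathbb{C}^n:\|u\|\le\alpha_1,\ \operatorname{Re}(u)\ge0,\ \textstyle\sum_{i=1}^n u_i=1,\ \operatorname{Re}(Bu)\le b\Big\},$$ $$S_2=\Big\{v\in\mathbb{C}^m:\|v\|\le\alpha_2,\ \operatorname{Re}(v)\ge0,\ \textstyle\sum_{i=1}^m v_i=1,\ \operatorname{Re}(Dv)\ge d\Big\},$$ and $f(u,v)=\operatorname{Re}(u^HAv)$. Assume (Slater condition) that there exist $u\in S_1$ and $v\in S_2$ for which all the defining inequality constraints of $S_1$ and of $S_2$ hold strictly. Then there exists $(u^\star,v^\star)\in S_1\times S_2$ such that $$f(u,v^\star)\le f(u^\star,v^\star)\le f(u^\star,v)\qquad\forall u\in S_1,\ v\in S_2.$$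
   Context: $\|\cdot\|$ is the Euclidean norm on $\mathbb{C}^k$, $u^H$ is the conjugate transpose, inequalities between real vectors are componentwise, and $\sum_i u_i=1$ is an equality of complex numbers. Player 1 (choosing $u$) maximizes $f$ and player 2 (choosing $v$) minimizes $f$. *)

theory Defs
  imports "HOL-Analysis.Analysis"
begin

definition S1 :: "real \<Rightarrow> complex^'n^'l \<Rightarrow> real^'l \<Rightarrow> (complex^'n) set" where
  "S1 \<alpha>1 B b = {u. norm u \<le> \<alpha>1 \<and> (\<forall>i. 0 \<le> Re (u $ i)) \<and> (\<Sum>i\<in>UNIV. u $ i) = 1
                     \<and> (\<forall>k. Re ((B *v u) $ k) \<le> b $ k)}"

definition S2 :: "real \<Rightarrow> complex^'m^'q \<Rightarrow> real^'q \<Rightarrow> (complex^'m) set" where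
  "S2 \<alpha>2 D d = {v. norm v \<le> \<alpha>2 \<and> (\<forall>i. 0 \<le> Re (v $ i)) \<and> (\<Sum>i\<in>UNIV. v $ i) = 1
                     \<and> (\<forall>k. d $ k \<le> Re ((D *v v) $ k))}"

definition payoff :: "complex^'m^'n \<Rightarrow> complex^'n \<Rightarrow> complex^'m \<Rightarrow> real" where
  "payoff A u v = Re (\<Sum>i\<in>UNIV. cnj (u $ i) * (A *v v) $ i)"

end

theory Submission
  imports Defs
begin

lemma saddle_abs:
  fixes g :: "'b::euclidean_space \<Rightarrow> 'a::euclidean_space" and h :: "'a \<Rightarrow> 'b"
  assumes S: "compact S" "convex S" "S \<noteq> {}"
    and T: "compact T" "convex T" "T \<noteq> {}"
    and cg: "continuous_on UNIV g" and ch: "continuous_on UNIV h"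
    and gh: "\<And>u v. inner u (g v) = inner (h u) v"
  shows "\<exists>us\<in>S. \<exists>vs\<in>T. \<forall>u\<in>S. \<forall>v\<in>T.
           inner u (g vs) \<le> inner us (g vs) \<and> inner us (g vs) \<le> inner us (g v)"
proof -
  have cS: "closed S" and cT: "closed T" using S T compact_imp_closed by auto
  define F where "F = (\<lambda>p. (closest_point S (fst p + g (snd p)), closest_point T (snd p - h (fst p))))"
  have cont: "continuous_on (S \<times> T) F"
    unfolding F_def
    apply (intro continuous_on_Pair)
     apply (rule continuous_on_compose2[OF continuous_on_closest_point[OF S(2) cS S(3)], where t=UNIV])
      apply (intro continuous_intros continuous_on_compose2[OF cg]; simp)
     apply simp
    apply (rule continuous_on_compose2[OF continuous_on_closest_point[OF T(2) cT T(3)], where t=UNIV])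
     apply (intro continuous_intros continuous_on_compose2[OF ch]; simp)
    apply simp
    done
  have fim: "F \<in> S \<times> T \<rightarrow> S \<times> T"
    unfolding F_def using closest_point_in_set[OF cS S(3)] closest_point_in_set[OF cT T(3)] by auto
  obtain p where p: "p \<in> S \<times> T" "F p = p"
    using brouwer[OF compact_Times[OF S(1) T(1)] convex_Times[OF S(2) T(2)] _ cont fim] S T by auto
  define us where "us = fst p"
  define vs where "vs = snd p"
  have us: "us \<in> S" and vs: "vs \<in> T" using p us_def vs_def by auto
  have e1: "closest_point S (us + g vs) = us" and e2: "closest_point T (vs - h us) = vs"
    using p(2) unfolding F_def us_def vs_def by (auto simp: prod_eq_iff)
  show ?thesis
  proof (intro bexI[OF _ us] bexI[OF _ vs] ballI conjI)
    fix u assume u: "u \<in> S"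
    have "inner (us + g vs - us) (u - us) \<le> 0"
      using closest_point_dot[OF S(2) cS u, of "us + g vs"] e1 by simp
    then show "inner u (g vs) \<le> inner us (g vs)"
      by (simp add: inner_diff_right inner_commute)
  next
    fix v assume v: "v \<in> T"
    have "inner (vs - h us - vs) (v - vs) \<le> 0"
      using closest_point_dot[OF T(2) cT v, of "vs - h us"] e2 by simp
    then show "inner us (g vs) \<le> inner us (g v)"
      by (simp add: gh inner_diff_right inner_diff_left)
  qed
qed


lemma inner_cplx: "inner (a::complex) b = Re (cnj a * b)"
  by (simp add: inner_complex_def)

lemma payoff_g: "payoff A u v = inner u (A *v v)"
  unfolding payoff_def inner_vec_def by (simp add: inner_cplx Re_sum)

lemma payoff_h: "payoff A u v = inner (\<chi> j. \<Sum>i\<in>UNIV. u$i * cnj (A$i$j)) v"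
proof -
  have "payoff A u v = (\<Sum>i\<in>UNIV. \<Sum>j\<in>UNIV. Re (cnj (u$i) * A$i$j * v$j))"
    unfolding payoff_def matrix_vector_mult_def
    by (simp add: Re_sum sum_distrib_left mult.assoc)
  also have "\<dots> = (\<Sum>j\<in>UNIV. \<Sum>i\<in>UNIV. Re (cnj (u$i) * A$i$j * v$j))"
    by (rule sum.swap)
  also have "\<dots> = inner (\<chi> j. \<Sum>i\<in>UNIV. u$i * cnj (A$i$j)) v"
    unfolding inner_vec_def
    by (simp add: inner_cplx Re_sum sum_distrib_right)
  finally show ?thesis .
qed

lemma mv_comb:
  fixes B :: "complex^'n^'l"
  shows "(B *v (a *\<^sub>R x + c *\<^sub>R y)) $ k = a *\<^sub>R (B *v x) $ k + c *\<^sub>R (B *v y) $ k"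
  unfolding matrix_vector_mult_def
  by (simp add: sum.distrib scaleR_sum_right distrib_left mult_scaleR_right)

lemma S1_props: "compact (S1 \<alpha> B b) \<and> convex (S1 \<alpha> B b)"
proof
  have "closed (S1 \<alpha> B b)"
    unfolding S1_def matrix_vector_mult_def
    by (intro closed_Collect_conj closed_Collect_all closed_Collect_le closed_Collect_eq continuous_intros)
  moreover have "bounded (S1 \<alpha> B b)"
    by (rule bounded_subset[OF bounded_cball[of 0 \<alpha>]]) (auto simp: S1_def)
  ultimately show "compact (S1 \<alpha> B b)" by (simp add: compact_eq_bounded_closed)
  show "convex (S1 \<alpha> B b)"
    unfolding convex_def
  proof (intro ballI allI impI)
    fix x y and a c :: real
    assume x: "x \<in> S1 \<alpha> B b" and y: "y \<in> S1 \<alpha> B b" and ac: "0 \<le> a" "0 \<le> c" "a + c = 1"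
    have "norm (a *\<^sub>R x + c *\<^sub>R y) \<le> a * norm x + c * norm y"
      using norm_triangle_ineq[of "a *\<^sub>R x" "c *\<^sub>R y"] ac by simp
    also have "\<dots> \<le> a * \<alpha> + c * \<alpha>"
      using x y ac by (intro add_mono mult_left_mono) (auto simp: S1_def)
    also have "a * \<alpha> + c * \<alpha> = \<alpha>" using ac by (metis distrib_right mult_1)
    finally have n: "norm (a *\<^sub>R x + c *\<^sub>R y) \<le> \<alpha>" .
    have s: "(\<Sum>i\<in>UNIV. (a *\<^sub>R x + c *\<^sub>R y) $ i) = 1"
      using x y ac by (simp add: S1_def sum.distrib scaleR_sum_right[symmetric] of_real_def[symmetric]
          flip: of_real_add)
    show "a *\<^sub>R x + c *\<^sub>R y \<in> S1 \<alpha> B b"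
      unfolding S1_def
    proof (intro CollectI conjI n s allI)
      fix i show "0 \<le> Re ((a *\<^sub>R x + c *\<^sub>R y) $ i)"
        using x y ac by (auto simp: S1_def)
    next
      fix k
      have "Re ((B *v (a *\<^sub>R x + c *\<^sub>R y)) $ k) = a * Re ((B *v x) $ k) + c * Re ((B *v y) $ k)"
        by (simp add: mv_comb)
      also have "\<dots> \<le> a * b $ k + c * b $ k"
        using x y ac by (intro add_mono mult_left_mono) (auto simp: S1_def)
      also have "a * b $ k + c * b $ k = b $ k" using ac by (metis distrib_right mult_1)
      finally show "Re ((B *v (a *\<^sub>R x + c *\<^sub>R y)) $ k) \<le> b $ k" .
    qed
  qed
qed

lemma S2_props: "compact (S2 \<alpha> D d) \<and> convex (S2 \<alpha> D d)"
proof
  have "closed (S2 \<alpha> D d)"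
    unfolding S2_def matrix_vector_mult_def
    by (intro closed_Collect_conj closed_Collect_all closed_Collect_le closed_Collect_eq continuous_intros)
  moreover have "bounded (S2 \<alpha> D d)"
    by (rule bounded_subset[OF bounded_cball[of 0 \<alpha>]]) (auto simp: S2_def)
  ultimately show "compact (S2 \<alpha> D d)" by (simp add: compact_eq_bounded_closed)
  show "convex (S2 \<alpha> D d)"
    unfolding convex_def
  proof (intro ballI allI impI)
    fix x y and a c :: real
    assume x: "x \<in> S2 \<alpha> D d" and y: "y \<in> S2 \<alpha> D d" and ac: "0 \<le> a" "0 \<le> c" "a + c = 1"
    have "norm (a *\<^sub>R x + c *\<^sub>R y) \<le> a * norm x + c * norm y"
      using norm_triangle_ineq[of "a *\<^sub>R x" "c *\<^sub>R y"] ac by simp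
    also have "\<dots> \<le> a * \<alpha> + c * \<alpha>"
      using x y ac by (intro add_mono mult_left_mono) (auto simp: S2_def)
    also have "a * \<alpha> + c * \<alpha> = \<alpha>" using ac by (metis distrib_right mult_1)
    finally have n: "norm (a *\<^sub>R x + c *\<^sub>R y) \<le> \<alpha>" .
    have s: "(\<Sum>i\<in>UNIV. (a *\<^sub>R x + c *\<^sub>R y) $ i) = 1"
      using x y ac by (simp add: S2_def sum.distrib scaleR_sum_right[symmetric] of_real_def[symmetric]
          flip: of_real_add)
    show "a *\<^sub>R x + c *\<^sub>R y \<in> S2 \<alpha> D d"
      unfolding S2_def
    proof (intro CollectI conjI n s allI)
      fix i show "0 \<le> Re ((a *\<^sub>R x + c *\<^sub>R y) $ i)"
        using x y ac by (auto simp: S2_def)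
    next
      fix k
      have "d $ k = a * d $ k + c * d $ k" using ac by (metis distrib_right mult_1)
      also have "\<dots> \<le> a * Re ((D *v x) $ k) + c * Re ((D *v y) $ k)"
        using x y ac by (intro add_mono mult_left_mono) (auto simp: S2_def)
      also have "\<dots> = Re ((D *v (a *\<^sub>R x + c *\<^sub>R y)) $ k)"
        by (simp add: mv_comb)
      finally show "d $ k \<le> Re ((D *v (a *\<^sub>R x + c *\<^sub>R y)) $ k)" .
    qed
  qed
qed


theorem theorem4:
  fixes A :: "complex^'m^'n" and B :: "complex^'n^'l" and b :: "real^'l"
    and D :: "complex^'m^'q" and d :: "real^'q" and \<alpha>1 \<alpha>2 :: real
  assumes "\<alpha>1 \<ge> 1 / sqrt (real CARD('n))" and "\<alpha>2 \<ge> 1 / sqrt (real CARD('m))"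
    and slater1: "\<exists>u \<in> S1 \<alpha>1 B b. norm u < \<alpha>1 \<and> (\<forall>i. 0 < Re (u $ i))
                     \<and> (\<forall>k. Re ((B *v u) $ k) < b $ k)"
    and slater2: "\<exists>v \<in> S2 \<alpha>2 D d. norm v < \<alpha>2 \<and> (\<forall>i. 0 < Re (v $ i))
                     \<and> (\<forall>k. d $ k < Re ((D *v v) $ k))"
  shows "\<exists>us \<in> S1 \<alpha>1 B b. \<exists>vs \<in> S2 \<alpha>2 D d.
           \<forall>u \<in> S1 \<alpha>1 B b. \<forall>v \<in> S2 \<alpha>2 D d.
             payoff A u vs \<le> payoff A us vs \<and> payoff A us vs \<le> payoff A us v"
proof -
  obtain u0 where "u0 \<in> S1 \<alpha>1 B b" using slater1 by blast
  obtain v0 where "v0 \<in> S2 \<alpha>2 D d" using slater2 by blast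
  have cg: "continuous_on UNIV (\<lambda>v::complex^'m. A *v v)"
    unfolding matrix_vector_mult_def by (intro continuous_intros)
  have ch: "continuous_on UNIV (\<lambda>u::complex^'n. \<chi> j. \<Sum>i\<in>UNIV. u$i * cnj (A$i$j))"
    by (intro continuous_intros)
  have gh: "\<And>u v. inner u (A *v v) = inner (\<chi> j. \<Sum>i\<in>UNIV. u$i * cnj (A$i$j)) v"
    by (metis payoff_g payoff_h)
  from saddle_abs[OF conjunct1[OF S1_props] conjunct2[OF S1_props] _
      conjunct1[OF S2_props] conjunct2[OF S2_props] _ cg ch gh, of \<alpha>1 B b \<alpha>2 D d]
    \<open>u0 \<in> S1 \<alpha>1 B b\<close> \<open>v0 \<in> S2 \<alpha>2 D d\<close>
  show ?thesis by (auto simp: payoff_g)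
qed

end
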